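(* Let $\Pi$ and $P$ be node-edge-checkable problems. Then: 1. $\Pi\xrightarrow{0}\tau_P(\tau_P(\Pi))$; 2. $\tau_P(\Pi)$ and $\tau_P(\tau_P(\tau_P(\Pi)))$ are equivalent, i.e., each is a relaxation of the other.
   Context: Fix $\Delta$. A node-edge-checkable problem $\Pi=(\Sigma_\Pi,\mathcal{N}_\Pi,\mathcal{E}_\Pi)$ has a finite label set, a node constraint $\mathcal{N}_\Pi$ (a set of cardinality-$\Delta$ multisets over $\Sigma_\Pi$) and an edge constraint $\mathcal{E}_\Pi$ (a set of cardinality-$2$ multisets). Relaxation. $\Pi\xrightarrow{0}\Pi'$ means there is a map $f$ with the following properties. For every $C=L_1\dots L_\Delta\in\mathcal{N}_\Pi$ and every $j$, $f$ assigns a label $f(C,j)\in\Sigma_{\Pi'}$. The map must satisfy: - $f(C,1)\dots f(C,\Delta)\in\mathcal{N}_{\Pi'}$; - whenever the $j$-th entry of $C$ and the $j'$-th entry of $C'$ form an element of $\mathcal{E}_\Pi$, then $f(C,j)f(C',j')\in\mathcal{E}_{\Pi'}$. The problem $\mathrm{R}^*(P)$ is defined as follows. - Labels are the nonempty subsets of $\Sigma_P$. - Node configurations are the $S_1\dots S_\Delta$ admitting $L_i\in S_i$ with $L_1\dots L_\Delta\in\mathcal{N}_P$. - Edge configurations are the $S_1S_2$ with $L_1L_2\in\mathcal{E}_P$ for all $L_1\in S_1,L_2\in S_2$. The tripotent input $\tau_P(\Pi)$ is defined as follows. - Labels are all functions $\Sigma_\Pi\to\Sigma_{\mathrm{R}^*(P)}$.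 - $f_1\dots f_\Delta$ is a node configuration iff $f_1(L_1)\dots f_\Delta(L_\Delta)\in\mathcal{N}_{\mathrm{R}^*(P)}$ for all $L_1\dots L_\Delta\in\mathcal{N}_\Pi$. - $f_1f_2$ is an edge configuration iff $f_1(L_1)f_2(L_2)\in\mathcal{E}_{\mathrm{R}^*(P)}$ for all $L_1L_2\in\mathcal{E}_\Pi$. *)

theory Defs
  imports Main "HOL-Library.Multiset" "HOL-Library.FuncSet"
begin

record 'a nec =
  labels :: "'a set"
  nodeC  :: "'a multiset set"
  edgeC  :: "'a multiset set"

definition wf_nec :: "nat \<Rightarrow> 'a nec \<Rightarrow> bool" where
  "wf_nec \<Delta> Prb \<longleftrightarrow> finite (labels Prb)
     \<and> (\<forall>C\<in>nodeC Prb. size C = \<Delta> \<and> set_mset C \<subseteq> labels Prb)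
     \<and> (\<forall>C\<in>edgeC Prb. size C = 2 \<and> set_mset C \<subseteq> labels Prb)"

definition relax0 :: "nat \<Rightarrow> 'a nec \<Rightarrow> 'b nec \<Rightarrow> bool" where
  "relax0 \<Delta> Prb Prb' \<longleftrightarrow> (\<exists>(ent :: 'a multiset \<Rightarrow> nat \<Rightarrow> 'a) (f :: 'a multiset \<Rightarrow> nat \<Rightarrow> 'b).
     (\<forall>C\<in>nodeC Prb.
        mset (map (ent C) [0..<\<Delta>]) = C
      \<and> (\<forall>j<\<Delta>. f C j \<in> labels Prb')
      \<and> mset (map (f C) [0..<\<Delta>]) \<in> nodeC Prb')
   \<and> (\<forall>C\<in>nodeC Prb. \<forall>C'\<in>nodeC Prb. \<forall>j<\<Delta>. \<forall>j'<\<Delta>.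
        {#ent C j, ent C' j'#} \<in> edgeC Prb \<longrightarrow> {#f C j, f C' j'#} \<in> edgeC Prb'))"

definition Rstar :: "nat \<Rightarrow> 'b nec \<Rightarrow> 'b set nec" where
  "Rstar \<Delta> P = \<lparr> labels = {S. S \<subseteq> labels P \<and> S \<noteq> {}},
     nodeC = {M. size M = \<Delta> \<and> set_mset M \<subseteq> {S. S \<subseteq> labels P \<and> S \<noteq> {}} \<and>
        (\<exists>Ss Ls. mset Ss = M \<and> length Ls = length Ss \<and> (\<forall>i<length Ss. Ls ! i \<in> Ss ! i)
                 \<and> mset Ls \<in> nodeC P)},
     edgeC = {M. \<exists>S1 S2. M = {#S1, S2#} \<and> S1 \<subseteq> labels P \<and> S1 \<noteq> {}
                 \<and> S2 \<subseteq> labels P \<and> S2 \<noteq> {}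
                 \<and> (\<forall>L1\<in>S1. \<forall>L2\<in>S2. {#L1, L2#} \<in> edgeC P)} \<rparr>"

text \<open>The tripotent input. Labels are functions from the labels of Pi to the labels
  of R*(P), represented as extensional functions (undefined outside the domain).\<close>
definition tau :: "nat \<Rightarrow> 'b nec \<Rightarrow> 'a nec \<Rightarrow> ('a \<Rightarrow> 'b set) nec" where
  "tau \<Delta> P Prb = (let R = Rstar \<Delta> P; F = labels Prb \<rightarrow>\<^sub>E labels R in
    \<lparr> labels = F,
      nodeC = {M. size M = \<Delta> \<and> set_mset M \<subseteq> F \<and>
        (\<exists>fs. mset fs = M \<and>
           (\<forall>Ls. length Ls = \<Delta> \<longrightarrow> mset Ls \<in> nodeC Prb \<longrightarrow>
                 mset (map2 (\<lambda>g L. g L) fs Ls) \<in> nodeC R))},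
      edgeC = {M. \<exists>f1 f2. M = {#f1, f2#} \<and> f1 \<in> F \<and> f2 \<in> F \<and>
        (\<forall>L1 L2. {#L1, L2#} \<in> edgeC Prb \<longrightarrow> {#f1 L1, f2 L2#} \<in> edgeC R)} \<rparr>)"

end

theory Submission
  imports Defs "HOL-Combinatorics.Permutations"
begin

lemma good_perm:
  assumes "mset hs = mset gs"
    and "\<forall>Ls. length Ls = length hs \<longrightarrow> Q (mset Ls) \<longrightarrow> X (mset (map2 (\<lambda>g L. g L) hs Ls))"
    and "length Ls = length gs" and "Q (mset Ls)"
  shows "X (mset (map2 (\<lambda>g L. g L) gs Ls))"
proof -
  obtain p where p: "p permutes {..<length hs}" "permute_list p hs = gs"
    using mset_eq_permutation[of gs hs] assms(1) by metis
  have len: "length hs = length gs" using assms(1) mset_eq_length by metis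
  define Ls' where "Ls' = permute_list (inv p) Ls"
  have ip: "inv p permutes {..<length Ls}" using p(1) len assms(3) by (simp add: permutes_inv)
  have pL: "p permutes {..<length Ls}" using p(1) len assms(3) by simp
  have "permute_list p Ls' = permute_list (inv p \<circ> p) Ls"
    unfolding Ls'_def using permute_list_compose[OF pL, of "inv p"] by simp
  also have "inv p \<circ> p = id" using permutes_inv_o(2)[OF p(1)] .
  finally have LL: "permute_list p Ls' = Ls" by (simp add: permute_list_id)
  have mL: "mset Ls' = mset Ls" unfolding Ls'_def using ip by simp
  have lL: "length Ls' = length hs" unfolding Ls'_def using len assms(3) by simp
  have "X (mset (map2 (\<lambda>g L. g L) hs Ls'))" using assms(2) lL mL assms(4) by metis
  moreover have "map2 (\<lambda>g L. g L) gs Ls = permute_list p (map2 (\<lambda>g L. g L) hs Ls')"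
  proof -
    have "map2 (\<lambda>g L. g L) gs Ls = map (\<lambda>(g, L). g L) (zip (permute_list p hs) (permute_list p Ls'))"
      using p(2) LL by simp
    also have "\<dots> = map (\<lambda>(g, L). g L) (permute_list p (zip hs Ls'))"
      using permute_list_zip[OF p(1) refl, of Ls'] lL by simp
    also have "\<dots> = permute_list p (map (\<lambda>(g, L). g L) (zip hs Ls'))"
      using permute_list_map[of p "zip hs Ls'" "\<lambda>(g, L). g L"] p(1) lL by simp
    finally show ?thesis .
  qed
  moreover have "p permutes {..<length (map2 (\<lambda>g L. g L) hs Ls')}" using p(1) lL by simp
  ultimately show ?thesis by simp
qed

lemma labels_tau: "labels (tau \<Delta> P Prb) = labels Prb \<rightarrow>\<^sub>E labels (Rstar \<Delta> P)"
  by (simp add: tau_def Let_def)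

lemma nodeC_tau: "M \<in> nodeC (tau \<Delta> P Prb) \<longleftrightarrow> size M = \<Delta> \<and> set_mset M \<subseteq> labels (tau \<Delta> P Prb) \<and>
        (\<exists>fs. mset fs = M \<and>
           (\<forall>Ls. length Ls = \<Delta> \<longrightarrow> mset Ls \<in> nodeC Prb \<longrightarrow>
                 mset (map2 (\<lambda>g L. g L) fs Ls) \<in> nodeC (Rstar \<Delta> P)))"
  by (simp add: tau_def Let_def)

lemma edgeC_tau: "M \<in> edgeC (tau \<Delta> P Prb) \<longleftrightarrow> (\<exists>f1 f2. M = {#f1, f2#} \<and> f1 \<in> labels (tau \<Delta> P Prb) \<and> f2 \<in> labels (tau \<Delta> P Prb) \<and>
        (\<forall>L1 L2. {#L1, L2#} \<in> edgeC Prb \<longrightarrow> {#f1 L1, f2 L2#} \<in> edgeC (Rstar \<Delta> P)))"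
  by (simp add: tau_def Let_def)

lemma finite_Rstar: "wf_nec \<Delta> P \<Longrightarrow> finite (labels (Rstar \<Delta> P))"
  unfolding wf_nec_def Rstar_def by (auto intro: finite_subset[of _ "Pow (labels P)"])

lemma wf_tau:
  assumes "wf_nec \<Delta> Prb" "wf_nec \<Delta> P"
  shows "wf_nec \<Delta> (tau \<Delta> P Prb)"
proof -
  have "finite (labels (tau \<Delta> P Prb))"
    unfolding labels_tau using assms finite_Rstar[OF assms(2)] by (auto simp: wf_nec_def intro: finite_PiE)
  then show ?thesis unfolding wf_nec_def by (auto simp: nodeC_tau edgeC_tau)
qed

lemma two_eq: "{#a, b#} = {#c, d#} \<Longrightarrow> (a = c \<and> b = d) \<or> (a = d \<and> b = c)"
  by (auto simp: add_eq_conv_ex)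

definition ev :: "nat \<Rightarrow> 'b nec \<Rightarrow> 'a nec \<Rightarrow> 'a \<Rightarrow> ('a \<Rightarrow> 'b set) \<Rightarrow> 'b set" where
  "ev \<Delta> P Prb L = restrict (\<lambda>g. g L) (labels (tau \<Delta> P Prb))"

lemma ev_label:
  assumes "L \<in> labels Prb"
  shows "ev \<Delta> P Prb L \<in> labels (tau \<Delta> P (tau \<Delta> P Prb))"
  unfolding ev_def labels_tau[of \<Delta> P "tau \<Delta> P Prb"]
  using assms by (auto simp: labels_tau)

lemma ev_edge:
  assumes wf: "wf_nec \<Delta> Prb" and e: "{#L1, L2#} \<in> edgeC Prb"
  shows "{#ev \<Delta> P Prb L1, ev \<Delta> P Prb L2#} \<in> edgeC (tau \<Delta> P (tau \<Delta> P Prb))"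
proof -
  have L: "L1 \<in> labels Prb" "L2 \<in> labels Prb" using wf e unfolding wf_nec_def by auto
  have "{#g1 L1, g2 L2#} \<in> edgeC (Rstar \<Delta> P)" if g: "{#g1, g2#} \<in> edgeC (tau \<Delta> P Prb)" for g1 g2
  proof -
    obtain f1 f2 where f: "{#g1, g2#} = {#f1, f2#}"
      "\<forall>L1 L2. {#L1, L2#} \<in> edgeC Prb \<longrightarrow> {#f1 L1, f2 L2#} \<in> edgeC (Rstar \<Delta> P)"
      using g unfolding edgeC_tau by blast
    have e2: "{#L2, L1#} \<in> edgeC Prb" using e by (simp add: add_mset_commute)
    from two_eq[OF f(1)] show ?thesis
    proof
      assume "g1 = f1 \<and> g2 = f2" then show ?thesis using f(2) e by auto
    next
      assume "g1 = f2 \<and> g2 = f1" then show ?thesis using f(2) e2 by (auto simp: add_mset_commute)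
    qed
  qed
  moreover have "g \<in> labels (tau \<Delta> P Prb)" if "{#g, g'#} \<in> edgeC (tau \<Delta> P Prb) \<or> {#g', g#} \<in> edgeC (tau \<Delta> P Prb)" for g g'
    using that unfolding edgeC_tau[of "{#g, g'#}"] edgeC_tau[of "{#g', g#}"] by (auto simp: add_eq_conv_ex)
  ultimately have "\<forall>g1 g2. {#g1, g2#} \<in> edgeC (tau \<Delta> P Prb) \<longrightarrow>
      {#ev \<Delta> P Prb L1 g1, ev \<Delta> P Prb L2 g2#} \<in> edgeC (Rstar \<Delta> P)"
    unfolding ev_def by auto
  then show ?thesis
    unfolding edgeC_tau[of _ \<Delta> P "tau \<Delta> P Prb"]
    using ev_label[OF L(1)] ev_label[OF L(2)] by blast
qed

lemma ev_node:
  assumes wf: "wf_nec \<Delta> Prb" and l: "length Ls = \<Delta>" and n: "mset Ls \<in> nodeC Prb"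
  shows "mset (map (ev \<Delta> P Prb) Ls) \<in> nodeC (tau \<Delta> P (tau \<Delta> P Prb))"
proof -
  have L: "set Ls \<subseteq> labels Prb" using wf n unfolding wf_nec_def by (metis set_mset_mset)
  have "mset (map2 (\<lambda>g L. g L) (map (ev \<Delta> P Prb) Ls) gs) \<in> nodeC (Rstar \<Delta> P)"
    if gs: "length gs = \<Delta>" "mset gs \<in> nodeC (tau \<Delta> P Prb)" for gs
  proof -
    have gl: "set gs \<subseteq> labels (tau \<Delta> P Prb)" using gs(2) unfolding nodeC_tau by auto
    have ev_i: "ev \<Delta> P Prb (Ls!i) (gs!i) = (gs!i) (Ls!i)" if "i < \<Delta>" for i
    proof -
      have "gs!i \<in> labels (tau \<Delta> P Prb)" using gl nth_mem[of i gs] that gs(1) by blast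
      then show ?thesis unfolding ev_def by simp
    qed
    have eq: "map2 (\<lambda>g L. g L) (map (ev \<Delta> P Prb) Ls) gs = map2 (\<lambda>g L. g L) gs Ls"
      by (intro nth_equalityI) (simp_all add: l gs(1) ev_i)
    obtain hs where hs: "mset hs = mset gs" and good: "\<forall>Ls. length Ls = \<Delta> \<longrightarrow> mset Ls \<in> nodeC Prb \<longrightarrow>
                 mset (map2 (\<lambda>g L. g L) hs Ls) \<in> nodeC (Rstar \<Delta> P)"
      using gs(2) unfolding nodeC_tau by blast
    have "length hs = \<Delta>" using hs gs(1) by (metis size_mset)
    then have good': "\<forall>Ls. length Ls = length hs \<longrightarrow> mset Ls \<in> nodeC Prb \<longrightarrow>
                 mset (map2 (\<lambda>g L. g L) hs Ls) \<in> nodeC (Rstar \<Delta> P)" using good by simp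
    have "mset (map2 (\<lambda>g L. g L) gs Ls) \<in> nodeC (Rstar \<Delta> P)"
      by (rule good_perm[OF hs good']) (simp_all add: l gs(1) n)
    then show ?thesis using eq by simp
  qed
  moreover have "set (map (ev \<Delta> P Prb) Ls) \<subseteq> labels (tau \<Delta> P (tau \<Delta> P Prb))"
    using L ev_label[of _ Prb \<Delta> P] by auto
  ultimately show ?thesis unfolding nodeC_tau[of _ _ _ "tau \<Delta> P Prb"]
    by (intro conjI exI[of _ "map (ev \<Delta> P Prb) Ls"]) (simp_all add: l)
qed

lemma part1:
  fixes Prb :: "'a nec"
  assumes wf: "wf_nec \<Delta> Prb"
  shows "relax0 \<Delta> Prb (tau \<Delta> P (tau \<Delta> P Prb))"
proof -
  define ent :: "'a multiset \<Rightarrow> nat \<Rightarrow> 'a" where "ent = (\<lambda>C j. (SOME xs. mset xs = C) ! j)"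
  define f where "f = (\<lambda>C j. ev \<Delta> P Prb (ent C j))"
  have key: "map (ent C) [0..<\<Delta>] = (SOME xs. mset xs = C) \<and> mset (SOME xs. mset xs = (C::'a multiset)) = C"
    if "C \<in> nodeC Prb" for C
  proof -
    have m: "mset (SOME xs. mset xs = C) = C" by (rule someI_ex) (rule ex_mset)
    then have "length (SOME xs. mset xs = C) = \<Delta>" using wf that unfolding wf_nec_def by (metis size_mset)
    then show ?thesis using m unfolding ent_def by (metis map_nth)
  qed
  have lab: "ent C j \<in> labels Prb" if "C \<in> nodeC Prb" "j < \<Delta>" for C j
  proof -
    have "ent C j \<in> set (map (ent C) [0..<\<Delta>])" using that(2) by simp
    then have "ent C j \<in># C" using key[OF that(1)] by (metis set_mset_mset)
    then show ?thesis using wf that(1) unfolding wf_nec_def by auto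
  qed
  have "\<forall>C\<in>nodeC Prb.
        mset (map (ent C) [0..<\<Delta>]) = C
      \<and> (\<forall>j<\<Delta>. f C j \<in> labels (tau \<Delta> P (tau \<Delta> P Prb)))
      \<and> mset (map (f C) [0..<\<Delta>]) \<in> nodeC (tau \<Delta> P (tau \<Delta> P Prb))"
  proof (intro ballI conjI allI impI)
    fix C assume C: "C \<in> nodeC Prb"
    show "mset (map (ent C) [0..<\<Delta>]) = C" using key[OF C] by simp
    show "f C j \<in> labels (tau \<Delta> P (tau \<Delta> P Prb))" if "j < \<Delta>" for j
      unfolding f_def by (rule ev_label) (rule lab[OF C that])
    have "map (f C) [0..<\<Delta>] = map (ev \<Delta> P Prb) (map (ent C) [0..<\<Delta>])" unfolding f_def by simp
    then show "mset (map (f C) [0..<\<Delta>]) \<in> nodeC (tau \<Delta> P (tau \<Delta> P Prb))"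
    proof -
      have "mset (map (ent C) [0..<\<Delta>]) \<in> nodeC Prb" using key[OF C] C by simp
      from ev_node[OF wf _ this, of P] show ?thesis
        using \<open>map (f C) [0..<\<Delta>] = _\<close> by (simp only: length_map length_upt)
    qed
  qed
  moreover have "\<forall>C\<in>nodeC Prb. \<forall>C'\<in>nodeC Prb. \<forall>j<\<Delta>. \<forall>j'<\<Delta>.
        {#ent C j, ent C' j'#} \<in> edgeC Prb \<longrightarrow> {#f C j, f C' j'#} \<in> edgeC (tau \<Delta> P (tau \<Delta> P Prb))"
    unfolding f_def using ev_edge[OF wf] by blast
  ultimately show ?thesis unfolding relax0_def by blast
qed

definition pb :: "nat \<Rightarrow> 'b nec \<Rightarrow> 'a nec \<Rightarrow> ((('a \<Rightarrow> 'b set) \<Rightarrow> 'b set) \<Rightarrow> 'b set) \<Rightarrow> 'a \<Rightarrow> 'b set" where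
  "pb \<Delta> P Prb h = restrict (\<lambda>L. h (ev \<Delta> P Prb L)) (labels Prb)"

lemma pb_label:
  assumes "h \<in> labels (tau \<Delta> P (tau \<Delta> P (tau \<Delta> P Prb)))"
  shows "pb \<Delta> P Prb h \<in> labels (tau \<Delta> P Prb)"
proof -
  have "h (ev \<Delta> P Prb L) \<in> labels (Rstar \<Delta> P)" if "L \<in> labels Prb" for L
    using PiE_mem[OF assms[unfolded labels_tau[of \<Delta> P "tau \<Delta> P (tau \<Delta> P Prb)"]] ev_label[OF that, of \<Delta> P]] .
  then show ?thesis unfolding pb_def labels_tau[of \<Delta> P Prb] by auto
qed

lemma pb_edge:
  assumes wf: "wf_nec \<Delta> Prb" and e: "{#h1, h2#} \<in> edgeC (tau \<Delta> P (tau \<Delta> P (tau \<Delta> P Prb)))"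
  shows "{#pb \<Delta> P Prb h1, pb \<Delta> P Prb h2#} \<in> edgeC (tau \<Delta> P Prb)"
proof -
  obtain f1 f2 where f: "{#h1, h2#} = {#f1, f2#}" "f1 \<in> labels (tau \<Delta> P (tau \<Delta> P (tau \<Delta> P Prb)))"
    "f2 \<in> labels (tau \<Delta> P (tau \<Delta> P (tau \<Delta> P Prb)))"
    "\<forall>G1 G2. {#G1, G2#} \<in> edgeC (tau \<Delta> P (tau \<Delta> P Prb)) \<longrightarrow> {#f1 G1, f2 G2#} \<in> edgeC (Rstar \<Delta> P)"
    using e unfolding edgeC_tau[of _ \<Delta> P "tau \<Delta> P (tau \<Delta> P Prb)"] by blast
  have hl: "h1 \<in> labels (tau \<Delta> P (tau \<Delta> P (tau \<Delta> P Prb)))" "h2 \<in> labels (tau \<Delta> P (tau \<Delta> P (tau \<Delta> P Prb)))"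
    using two_eq[OF f(1)] f(2,3) by auto
  have "{#pb \<Delta> P Prb h1 L1, pb \<Delta> P Prb h2 L2#} \<in> edgeC (Rstar \<Delta> P)"
    if e1: "{#L1, L2#} \<in> edgeC Prb" for L1 L2
  proof -
    have L: "L1 \<in> labels Prb" "L2 \<in> labels Prb" using wf e1 unfolding wf_nec_def by auto
    have e2: "{#L2, L1#} \<in> edgeC Prb" using e1 by (simp add: add_mset_commute)
    have a: "{#f1 (ev \<Delta> P Prb L1), f2 (ev \<Delta> P Prb L2)#} \<in> edgeC (Rstar \<Delta> P)"
      using f(4) ev_edge[OF wf e1, of P] by blast
    have b: "{#f1 (ev \<Delta> P Prb L2), f2 (ev \<Delta> P Prb L1)#} \<in> edgeC (Rstar \<Delta> P)"
      using f(4) ev_edge[OF wf e2, of P] by blast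
    from two_eq[OF f(1)] show ?thesis
    proof
      assume "h1 = f1 \<and> h2 = f2" then show ?thesis using a L unfolding pb_def by simp
    next
      assume "h1 = f2 \<and> h2 = f1" then show ?thesis using b L unfolding pb_def by (simp add: add_mset_commute)
    qed
  qed
  then show ?thesis unfolding edgeC_tau[of _ \<Delta> P Prb]
    using pb_label[OF hl(1)] pb_label[OF hl(2)] by blast
qed

lemma part3:
  fixes Prb :: "'a nec" and P :: "'b nec"
  assumes wf: "wf_nec \<Delta> Prb"
  shows "relax0 \<Delta> (tau \<Delta> P (tau \<Delta> P (tau \<Delta> P Prb))) (tau \<Delta> P Prb)"
proof -
  define good where "good = (\<lambda>fs. \<forall>Ls. length Ls = \<Delta> \<longrightarrow> mset Ls \<in> nodeC (tau \<Delta> P (tau \<Delta> P Prb)) \<longrightarrow>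
                 mset (map2 (\<lambda>g L. g L) fs Ls) \<in> nodeC (Rstar \<Delta> P))"
  define W where "W = (\<lambda>C. SOME fs. mset fs = C \<and> good fs)"
  define ent :: "((('a \<Rightarrow> 'b set) \<Rightarrow> 'b set) \<Rightarrow> 'b set) multiset \<Rightarrow> nat \<Rightarrow> ((('a \<Rightarrow> 'b set) \<Rightarrow> 'b set) \<Rightarrow> 'b set)"
    where "ent = (\<lambda>C j. W C ! j)"
  define f where "f = (\<lambda>C j. pb \<Delta> P Prb (ent C j))"
  have key: "mset (W C) = C \<and> good (W C) \<and> length (W C) = \<Delta> \<and> map (ent C) [0..<\<Delta>] = W C
      \<and> set (W C) \<subseteq> labels (tau \<Delta> P (tau \<Delta> P (tau \<Delta> P Prb)))"
    if C: "C \<in> nodeC (tau \<Delta> P (tau \<Delta> P (tau \<Delta> P Prb)))" for C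
  proof -
    have ex: "\<exists>fs. mset fs = C \<and> good fs" using C unfolding nodeC_tau good_def by blast
    have m: "mset (W C) = C \<and> good (W C)" unfolding W_def using someI_ex[OF ex] .
    have sz: "size C = \<Delta>" "set_mset C \<subseteq> labels (tau \<Delta> P (tau \<Delta> P (tau \<Delta> P Prb)))"
      using C unfolding nodeC_tau by auto
    then have l: "length (W C) = \<Delta>" using m by (metis size_mset)
    then have "map (ent C) [0..<\<Delta>] = W C" unfolding ent_def by (metis map_nth)
    moreover have "set (W C) = set_mset C" using m by (metis set_mset_mset)
    ultimately show ?thesis using m l sz by simp
  qed
  have "\<forall>C\<in>nodeC (tau \<Delta> P (tau \<Delta> P (tau \<Delta> P Prb))).
        mset (map (ent C) [0..<\<Delta>]) = C
      \<and> (\<forall>j<\<Delta>. f C j \<in> labels (tau \<Delta> P Prb))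
      \<and> mset (map (f C) [0..<\<Delta>]) \<in> nodeC (tau \<Delta> P Prb)"
  proof (intro ballI conjI allI impI)
    fix C assume C: "C \<in> nodeC (tau \<Delta> P (tau \<Delta> P (tau \<Delta> P Prb)))"
    note k = key[OF C]
    show "mset (map (ent C) [0..<\<Delta>]) = C" using k by simp
    have el: "ent C j \<in> labels (tau \<Delta> P (tau \<Delta> P (tau \<Delta> P Prb)))" if "j < \<Delta>" for j
      using k that nth_mem[of j "W C"] unfolding ent_def by auto
    show "f C j \<in> labels (tau \<Delta> P Prb)" if "j < \<Delta>" for j
      unfolding f_def by (rule pb_label[OF el[OF that]])
    have mf: "map (f C) [0..<\<Delta>] = map (pb \<Delta> P Prb) (W C)"
    proof -
      have "map (f C) [0..<\<Delta>] = map (pb \<Delta> P Prb) (map (ent C) [0..<\<Delta>])" unfolding f_def by simp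
      then show ?thesis using k by simp
    qed
    have sl: "set (map (pb \<Delta> P Prb) (W C)) \<subseteq> labels (tau \<Delta> P Prb)"
      using k pb_label[of _ \<Delta> P Prb] by auto
    have gd: "mset (map2 (\<lambda>g L. g L) (map (pb \<Delta> P Prb) (W C)) Ls) \<in> nodeC (Rstar \<Delta> P)"
      if Ls: "length Ls = \<Delta>" "mset Ls \<in> nodeC Prb" for Ls
    proof -
      have L: "set Ls \<subseteq> labels Prb" using wf Ls(2) unfolding wf_nec_def by (metis set_mset_mset)
      have pi: "pb \<Delta> P Prb (W C ! i) (Ls ! i) = (W C ! i) (ev \<Delta> P Prb (Ls ! i))" if "i < \<Delta>" for i
      proof -
        have "Ls ! i \<in> labels Prb" using L nth_mem[of i Ls] that Ls(1) by blast
        then show ?thesis unfolding pb_def by simp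
      qed
      have eq: "map2 (\<lambda>g L. g L) (map (pb \<Delta> P Prb) (W C)) Ls = map2 (\<lambda>g L. g L) (W C) (map (ev \<Delta> P Prb) Ls)"
        by (intro nth_equalityI) (simp_all add: k Ls(1) pi)
      have "mset (map (ev \<Delta> P Prb) Ls) \<in> nodeC (tau \<Delta> P (tau \<Delta> P Prb))"
        by (rule ev_node[OF wf Ls])
      then have "mset (map2 (\<lambda>g L. g L) (W C) (map (ev \<Delta> P Prb) Ls)) \<in> nodeC (Rstar \<Delta> P)"
        using k Ls(1) unfolding good_def by simp
      then show ?thesis using eq by simp
    qed
    have "mset (map (pb \<Delta> P Prb) (W C)) \<in> nodeC (tau \<Delta> P Prb)"
    proof -
      from k have k3: "length (W C) = \<Delta>" by blast
      have s1: "size (mset (map (pb \<Delta> P Prb) (W C))) = \<Delta>" using k3 by simp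
      have s2: "set_mset (mset (map (pb \<Delta> P Prb) (W C))) \<subseteq> labels (tau \<Delta> P Prb)" using sl by simp
      show ?thesis unfolding nodeC_tau[of _ \<Delta> P Prb] using s1 s2 gd by blast
    qed
    then show "mset (map (f C) [0..<\<Delta>]) \<in> nodeC (tau \<Delta> P Prb)" using mf by simp
  qed
  moreover have "\<forall>C\<in>nodeC (tau \<Delta> P (tau \<Delta> P (tau \<Delta> P Prb))). \<forall>C'\<in>nodeC (tau \<Delta> P (tau \<Delta> P (tau \<Delta> P Prb))).
        \<forall>j<\<Delta>. \<forall>j'<\<Delta>.
        {#ent C j, ent C' j'#} \<in> edgeC (tau \<Delta> P (tau \<Delta> P (tau \<Delta> P Prb))) \<longrightarrow> {#f C j, f C' j'#} \<in> edgeC (tau \<Delta> P Prb)"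
    unfolding f_def using pb_edge[OF wf] by blast
  ultimately show ?thesis unfolding relax0_def by blast
qed

theorem mainTheorem11:
  fixes \<Delta> :: nat and Prb :: "'a nec" and P :: "'b nec"
  assumes "wf_nec \<Delta> Prb" and "wf_nec \<Delta> P"
  shows "relax0 \<Delta> Prb (tau \<Delta> P (tau \<Delta> P Prb))
       \<and> relax0 \<Delta> (tau \<Delta> P Prb) (tau \<Delta> P (tau \<Delta> P (tau \<Delta> P Prb)))
       \<and> relax0 \<Delta> (tau \<Delta> P (tau \<Delta> P (tau \<Delta> P Prb))) (tau \<Delta> P Prb)"
  using part1[OF assms(1)] part1[OF wf_tau[OF assms]] part3[OF assms(1)] by blast

end
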